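(* Suppose that the penalties $\widehat C_1,\widehat C_2,\dots$ are such that, for some constant $\gamma>0$ and for all $k\ge 1$, $$\mathbb P\{\widehat C_k\le (L-\widehat L)(\hat f_k)\}\le \frac{\gamma}{n^2k^2}.$$ Then $$\mathbb E L(\hat f)-L^*\le \inf_{k\ge1}\bigl[L_k^*-L^*+\mathbb E\widehat C_k\bigr]+\frac{2\gamma}{n^2}.$$
   Context: Let $(X,Y)$ be a random pair taking values in $\mathbb R^d\times\{0,1\}$ with arbitrary distribution, and let $\mathcal D_n=((X_1,Y_1),\dots,(X_n,Y_n))$ be $n$ i.i.d. copies of $(X,Y)$, independent of $(X,Y)$. A classifier is a measurable map $f:\mathbb R^d\to\{0,1\}$. Its loss is $L(f)=\mathbb P\{f(X)\ne Y\}$ (for a classifier chosen from the data, $L(f)=\mathbb P\{f(X)\neq Y\mid\mathcal D_n\}$), its empirical loss is $\widehat L(f)=\frac1n\sum_{i=1}^n\mathbb I\{f(X_i)\ne Y_i\}$, and $(L-\widehat L)(f)=L(f)-\widehat L(f)$. Let $L^*=\inf_f L(f)$, the infimum over all classifiers. Let $\mathcal F_1,\mathcal F_2,\dots$ be fixed (non-random) classes of classifiers; $\hat f_k\in\mathcal F_k$ denotes a minimizer of $\widehat L$ over $\mathcal F_k$, and $L_k^*=\inf_{f\in\mathcal F_k}L(f)$. The penalties $\widehat C_k$, $k\ge1$, are nonnegative random variables that are measurable functions of $\mathcal D_n$. The penalized estimator is $\hat f=\hat f_{\hat k}$ where $\hat k\in\arg\min_{k\ge1}(\widehat L(\hat f_k)+\widehat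 C_k)$ (assumed to exist). All quantities are assumed measurable. *)

theory Defs
  imports "HOL-Probability.Probability"
begin

text \<open>Classifiers: measurable maps from the feature space to the label set
  (labels {0,1} encoded as bool).\<close>
definition classifiers :: "('x::topological_space \<Rightarrow> bool) set" where
  "classifiers = measurable borel (count_space UNIV)"

definition loss :: "'o measure \<Rightarrow> ('o \<Rightarrow> 'x) \<Rightarrow> ('o \<Rightarrow> bool) \<Rightarrow> ('x \<Rightarrow> bool) \<Rightarrow> real" where
  "loss M X Y f = measure M {\<omega> \<in> space M. f (X \<omega>) \<noteq> Y \<omega>}"

definition emp_loss :: "nat \<Rightarrow> (nat \<Rightarrow> 'o \<Rightarrow> 'x) \<Rightarrow> (nat \<Rightarrow> 'o \<Rightarrow> bool) \<Rightarrow> ('x \<Rightarrow> bool) \<Rightarrow> 'o \<Rightarrow> real" where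
  "emp_loss n Xs Ys f \<omega> = (\<Sum>i<n. if f (Xs i \<omega>) \<noteq> Ys i \<omega> then 1 else 0) / real n"

end

theory Submission
  imports Defs
begin


lemma emp_loss_nonneg: "0 \<le> emp_loss n Xs Ys f \<omega>"
  unfolding emp_loss_def by (intro divide_nonneg_nonneg sum_nonneg) auto

lemma emp_loss_le1: "emp_loss n Xs Ys f \<omega> \<le> 1"
proof (cases "n = 0")
  case True then show ?thesis by (simp add: emp_loss_def)
next
  case False
  have "(\<Sum>i<n. if f (Xs i \<omega>) \<noteq> Ys i \<omega> then 1 else 0) \<le> (\<Sum>i<n. (1::real))"
    by (intro sum_mono) auto
  then show ?thesis using False by (simp add: emp_loss_def)
qed

lemma pred_set_meas:
  assumes g: "g \<in> classifiers"
  shows "{p :: (real ^ 'd) \<times> bool. g (fst p) \<noteq> snd p} \<in> sets (borel \<Otimes>\<^sub>M count_space UNIV)"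
proof -
  have gm: "g \<in> measurable borel (count_space UNIV)" using g by (simp add: classifiers_def)
  have "(\<lambda>p :: (real ^ 'd) \<times> bool. g (fst p)) \<in> measurable (borel \<Otimes>\<^sub>M count_space UNIV) (count_space UNIV)"
    using gm by measurable
  moreover have "(\<lambda>p :: (real ^ 'd) \<times> bool. snd p) \<in> measurable (borel \<Otimes>\<^sub>M count_space UNIV) (count_space UNIV)"
    by measurable
  ultimately have "{p \<in> space (borel \<Otimes>\<^sub>M count_space UNIV). g (fst p) \<noteq> snd p} \<in> sets (borel \<Otimes>\<^sub>M count_space UNIV)"
    by measurable
  then show ?thesis by (simp add: space_pair_measure)
qed


lemma exp_emp_loss:
  fixes M :: "'o measure" and X :: "'o \<Rightarrow> real ^ 'd" and Y :: "'o \<Rightarrow> bool"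
    and Xs :: "nat \<Rightarrow> 'o \<Rightarrow> real ^ 'd" and Ys :: "nat \<Rightarrow> 'o \<Rightarrow> bool"
  assumes prob: "prob_space M" and n_pos: "n > 0"
    and X_meas: "X \<in> borel_measurable M" and Y_meas: "Y \<in> measurable M (count_space UNIV)"
    and Xs_meas: "\<And>i. i < n \<Longrightarrow> Xs i \<in> borel_measurable M"
    and Ys_meas: "\<And>i. i < n \<Longrightarrow> Ys i \<in> measurable M (count_space UNIV)"
    and ident: "\<And>i. i < n \<Longrightarrow>
                  distr M (borel \<Otimes>\<^sub>M count_space UNIV) (\<lambda>\<omega>. (Xs i \<omega>, Ys i \<omega>))
                  = distr M (borel \<Otimes>\<^sub>M count_space UNIV) (\<lambda>\<omega>. (X \<omega>, Y \<omega>))"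
    and g: "g \<in> classifiers"
  shows "integrable M (emp_loss n Xs Ys g) \<and> integral\<^sup>L M (emp_loss n Xs Ys g) = loss M X Y g"
proof -
  interpret prob_space M by (rule prob)
  define S where "S = {p :: (real ^ 'd) \<times> bool. g (fst p) \<noteq> snd p}"
  have S: "S \<in> sets (borel \<Otimes>\<^sub>M count_space UNIV)" unfolding S_def by (rule pred_set_meas[OF g])
  define A where "A i = {\<omega>\<in>space M. g (Xs i \<omega>) \<noteq> Ys i \<omega>}" for i
  have pm: "(\<lambda>\<omega>. (Xs i \<omega>, Ys i \<omega>)) \<in> measurable M (borel \<Otimes>\<^sub>M count_space UNIV)" if "i < n" for i
    using Xs_meas[OF that] Ys_meas[OF that] by (intro measurable_Pair) auto
  have pmXY: "(\<lambda>\<omega>. (X \<omega>, Y \<omega>)) \<in> measurable M (borel \<Otimes>\<^sub>M count_space UNIV)"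
    using X_meas Y_meas by (intro measurable_Pair) auto
  have Apre: "A i = (\<lambda>\<omega>. (Xs i \<omega>, Ys i \<omega>)) -` S \<inter> space M" for i
    by (auto simp: A_def S_def)
  have Asets: "A i \<in> sets M" if "i < n" for i
    unfolding Apre using measurable_sets[OF pm[OF that] S] .
  have mA: "measure M (A i) = loss M X Y g" if "i < n" for i
  proof -
    have "measure M (A i) = measure (distr M (borel \<Otimes>\<^sub>M count_space UNIV) (\<lambda>\<omega>. (Xs i \<omega>, Ys i \<omega>))) S"
      unfolding Apre by (rule measure_distr[OF pm[OF that] S, symmetric])
    also have "\<dots> = measure (distr M (borel \<Otimes>\<^sub>M count_space UNIV) (\<lambda>\<omega>. (X \<omega>, Y \<omega>))) S"
      using ident[OF that] by simp
    also have "\<dots> = measure M ((\<lambda>\<omega>. (X \<omega>, Y \<omega>)) -` S \<inter> space M)"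
      by (rule measure_distr[OF pmXY S])
    also have "(\<lambda>\<omega>. (X \<omega>, Y \<omega>)) -` S \<inter> space M = {\<omega> \<in> space M. g (X \<omega>) \<noteq> Y \<omega>}"
      by (auto simp: S_def)
    finally show ?thesis by (simp add: loss_def)
  qed
  have eq: "emp_loss n Xs Ys g \<omega> = (\<Sum>i<n. indicator (A i) \<omega>) / real n" if "\<omega> \<in> space M" for \<omega>
    unfolding emp_loss_def A_def using that by (intro arg_cong2[where f="(/)"] sum.cong) (auto simp: indicator_def)
  have int: "integrable M (\<lambda>\<omega>. (\<Sum>i<n. indicator (A i) \<omega>) / real n :: real)"
    using Asets by (intro integrable_divide_zero integrable_sum integrable_real_indicator) (auto simp: emeasure_eq_measure)
  have "integral\<^sup>L M (\<lambda>\<omega>. (\<Sum>i<n. indicator (A i) \<omega>) / real n :: real) = (\<Sum>i<n. measure M (A i)) / real n"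
    proof -
    have "integral\<^sup>L M (\<lambda>\<omega>. (\<Sum>i<n. indicator (A i) \<omega>) :: real) = (\<Sum>i<n. integral\<^sup>L M (indicator (A i) :: _ \<Rightarrow> real))"
      by (rule Bochner_Integration.integral_sum) (use Asets in \<open>auto simp: emeasure_eq_measure intro!: integrable_real_indicator\<close>)
    also have "\<dots> = (\<Sum>i<n. measure M (A i))"
      using Asets by (intro sum.cong) (auto simp: Int_absorb2 sets.sets_into_space)
    finally show ?thesis by simp
  qed
  also have "\<dots> = loss M X Y g" using mA n_pos by simp
  finally have v: "integral\<^sup>L M (\<lambda>\<omega>. (\<Sum>i<n. indicator (A i) \<omega>) / real n :: real) = loss M X Y g" .
  have c1: "integrable M (emp_loss n Xs Ys g) = integrable M (\<lambda>\<omega>. (\<Sum>i<n. indicator (A i) \<omega>) / real n :: real)"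
    by (rule Bochner_Integration.integrable_cong) (auto simp: eq)
  have c2: "integral\<^sup>L M (emp_loss n Xs Ys g) = integral\<^sup>L M (\<lambda>\<omega>. (\<Sum>i<n. indicator (A i) \<omega>) / real n :: real)"
    by (rule Bochner_Integration.integral_cong) (auto simp: eq)
  show ?thesis using c1 c2 v int by simp
qed

theorem lemma2p1:
  fixes M :: "'o measure"
    and X :: "'o \<Rightarrow> real ^ 'd" and Y :: "'o \<Rightarrow> bool"
    and Xs :: "nat \<Rightarrow> 'o \<Rightarrow> real ^ 'd" and Ys :: "nat \<Rightarrow> 'o \<Rightarrow> bool"
    and n :: nat
    and F :: "nat \<Rightarrow> (real ^ 'd \<Rightarrow> bool) set"
    and fhat :: "nat \<Rightarrow> 'o \<Rightarrow> (real ^ 'd \<Rightarrow> bool)"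
    and C :: "nat \<Rightarrow> 'o \<Rightarrow> real"
    and khat :: "'o \<Rightarrow> nat"
    and \<gamma> :: real
  assumes prob: "prob_space M"
    and n_pos: "n > 0"
    (* random pair and sample: measurable, i.i.d., sample independent of (X,Y) *)
    and X_meas: "X \<in> borel_measurable M" and Y_meas: "Y \<in> measurable M (count_space UNIV)"
    and Xs_meas: "\<And>i. i < n \<Longrightarrow> Xs i \<in> borel_measurable M"
    and Ys_meas: "\<And>i. i < n \<Longrightarrow> Ys i \<in> measurable M (count_space UNIV)"
    and indep: "prob_space.indep_vars M (\<lambda>_. borel \<Otimes>\<^sub>M count_space UNIV)
                  (\<lambda>i \<omega>. if i < n then (Xs i \<omega>, Ys i \<omega>) else (X \<omega>, Y \<omega>)) {0..n}"
    and ident: "\<And>i. i < n \<Longrightarrow>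
                  distr M (borel \<Otimes>\<^sub>M count_space UNIV) (\<lambda>\<omega>. (Xs i \<omega>, Ys i \<omega>))
                  = distr M (borel \<Otimes>\<^sub>M count_space UNIV) (\<lambda>\<omega>. (X \<omega>, Y \<omega>))"
    (* fixed classes of classifiers *)
    and F_cls: "\<And>k. k \<ge> 1 \<Longrightarrow> F k \<subseteq> classifiers"
    (* empirical risk minimizers, functions of the data *)
    and fhat_in: "\<And>k \<omega>. k \<ge> 1 \<Longrightarrow> \<omega> \<in> space M \<Longrightarrow> fhat k \<omega> \<in> F k"
    and fhat_min: "\<And>k \<omega> g. k \<ge> 1 \<Longrightarrow> \<omega> \<in> space M \<Longrightarrow> g \<in> F k \<Longrightarrow>
                     emp_loss n Xs Ys (fhat k \<omega>) \<omega> \<le> emp_loss n Xs Ys g \<omega>"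
    and fhat_data: "\<And>k \<omega> \<omega>'. k \<ge> 1 \<Longrightarrow> \<omega> \<in> space M \<Longrightarrow> \<omega>' \<in> space M \<Longrightarrow>
                     (\<forall>i<n. Xs i \<omega> = Xs i \<omega>' \<and> Ys i \<omega> = Ys i \<omega>') \<Longrightarrow> fhat k \<omega> = fhat k \<omega>'"
    (* penalties: nonnegative measurable functions of the data *)
    and C_nonneg: "\<And>k \<omega>. k \<ge> 1 \<Longrightarrow> \<omega> \<in> space M \<Longrightarrow> C k \<omega> \<ge> 0"
    and C_meas: "\<And>k. k \<ge> 1 \<Longrightarrow> C k \<in> borel_measurable M"
    and C_data: "\<And>k \<omega> \<omega>'. k \<ge> 1 \<Longrightarrow> \<omega> \<in> space M \<Longrightarrow> \<omega>' \<in> space M \<Longrightarrow>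
                     (\<forall>i<n. Xs i \<omega> = Xs i \<omega>' \<and> Ys i \<omega> = Ys i \<omega>') \<Longrightarrow> C k \<omega> = C k \<omega>'"
    (* penalized model selection *)
    and khat_ge: "\<And>\<omega>. \<omega> \<in> space M \<Longrightarrow> khat \<omega> \<ge> 1"
    and khat_min: "\<And>k \<omega>. k \<ge> 1 \<Longrightarrow> \<omega> \<in> space M \<Longrightarrow>
                     emp_loss n Xs Ys (fhat (khat \<omega>) \<omega>) \<omega> + C (khat \<omega>) \<omega>
                     \<le> emp_loss n Xs Ys (fhat k \<omega>) \<omega> + C k \<omega>"
    (* all quantities measurable *)
    and khat_meas: "khat \<in> measurable M (count_space UNIV)"
    and L_meas: "\<And>k. k \<ge> 1 \<Longrightarrow> (\<lambda>\<omega>. loss M X Y (fhat k \<omega>)) \<in> borel_measurable M"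
    and Lhat_meas: "\<And>k. k \<ge> 1 \<Longrightarrow> (\<lambda>\<omega>. emp_loss n Xs Ys (fhat k \<omega>) \<omega>) \<in> borel_measurable M"
    and Lfinal_meas: "(\<lambda>\<omega>. loss M X Y (fhat (khat \<omega>) \<omega>)) \<in> borel_measurable M"
    (* hypothesis on the penalties *)
    and gamma_pos: "\<gamma> > 0"
    and tail: "\<And>k. k \<ge> 1 \<Longrightarrow>
                 measure M {\<omega> \<in> space M. C k \<omega> \<le> loss M X Y (fhat k \<omega>) - emp_loss n Xs Ys (fhat k \<omega>) \<omega>}
                 \<le> \<gamma> / (real n ^ 2 * real k ^ 2)"
  shows "ereal ((\<integral>\<omega>. loss M X Y (fhat (khat \<omega>) \<omega>) \<partial>M) - (INF f\<in>classifiers. loss M X Y f))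
         \<le> (INF k\<in>{1..}. ereal ((INF f\<in>F k. loss M X Y f) - (INF f\<in>classifiers. loss M X Y f))
                            + enn2ereal (\<integral>\<^sup>+\<omega>. ennreal (C k \<omega>) \<partial>M))
           + ereal (2 * \<gamma> / real n ^ 2)"
  proof -
  interpret prob_space M by (rule prob)
  define Lf where "Lf \<omega> = loss M X Y (fhat (khat \<omega>) \<omega>)" for \<omega>
  define Lk where "Lk k \<omega> = loss M X Y (fhat k \<omega>)" for k \<omega>
  define Lh where "Lh k \<omega> = emp_loss n Xs Ys (fhat k \<omega>) \<omega>" for k \<omega>
  define E where "E j = {\<omega>\<in>space M. C j \<omega> \<le> Lk j \<omega> - Lh j \<omega>}" for j
  define U where "U = (\<Union>i. E (Suc i))"
  define Ls where "Ls = (INF f\<in>classifiers. loss M X Y f)"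
  define c where "c = 2 * \<gamma> / real n ^ 2"
  have loss_bd: "0 \<le> loss M X Y f \<and> loss M X Y f \<le> 1" for f
    by (simp add: loss_def)
  have Esets: "E j \<in> sets M" if "j \<ge> 1" for j
    unfolding E_def Lk_def Lh_def
    using C_meas[OF that] L_meas[OF that] Lhat_meas[OF that]
    by (intro borel_measurable_le borel_measurable_diff) auto
  have Usets: "U \<in> sets M" unfolding U_def using Esets by auto
  define gs where "gs i = \<gamma> / real n ^ 2 * (1 / (real i + 1)^2)" for i
  have gs_sums: "gs sums (\<gamma> / real n ^ 2 * (pi^2/6))"
    unfolding gs_def by (intro sums_mult) (use inverse_squares_sums in \<open>simp add: add.commute\<close>)
  have mE: "measure M (E (Suc i)) \<le> gs i" for i
  proof -
    have "measure M (E (Suc i)) \<le> \<gamma> / (real n ^ 2 * real (Suc i) ^ 2)"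
      using tail[of "Suc i"] unfolding E_def Lk_def Lh_def by simp
    also have "\<dots> = gs i" by (simp add: gs_def add.commute)
    finally show ?thesis .
  qed
  have summ: "summable (\<lambda>i. measure M (E (Suc i)))"
    by (rule summable_comparison_test[OF _ sums_summable[OF gs_sums]]) (use mE in auto)
  have PU: "measure M U \<le> c"
  proof -
    have "measure M U \<le> (\<Sum>i. measure M (E (Suc i)))"
      unfolding U_def using Esets summ by (intro finite_measure_subadditive_countably) auto
    also have "\<dots> \<le> (\<Sum>i. gs i)"
      by (rule suminf_le[OF mE summ sums_summable[OF gs_sums]])
    also have "\<dots> = \<gamma> / real n ^ 2 * (pi^2/6)" using gs_sums sums_unique by metis
    also have "\<dots> \<le> c"
    proof -
      have p1: "pi \<le> 3.15" using pi_approx by simp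
      have "pi * pi \<le> 3.15 * 3.15" using p1 pi_gt_zero by (intro mult_mono) auto
      then have "pi^2/6 \<le> (2::real)" by (simp add: power2_eq_square)
      moreover have "\<gamma> / real n ^ 2 \<ge> 0" using gamma_pos by simp
      ultimately show ?thesis unfolding c_def
        by (metis mult.commute mult_left_mono times_divide_eq_right)
    qed
    finally show ?thesis .
  qed
  have pointwise: "Lf \<omega> \<le> indicator U \<omega> + Lh k \<omega> + C k \<omega>" if k: "k \<ge> 1" and w: "\<omega> \<in> space M" for k \<omega>
  proof (cases "\<omega> \<in> U")
    case True
    then show ?thesis using loss_bd[of "fhat (khat \<omega>) \<omega>"] emp_loss_nonneg[of n Xs Ys "fhat k \<omega>" \<omega>] C_nonneg[OF k w]
      unfolding Lf_def Lh_def by (simp add: indicator_def)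
  next
    case False
    have J: "khat \<omega> \<ge> 1" using khat_ge[OF w] .
    then obtain i where i: "khat \<omega> = Suc i" by (cases "khat \<omega>") auto
    have "\<omega> \<notin> E (khat \<omega>)" using False unfolding U_def i by auto
    then have "C (khat \<omega>) \<omega> > Lk (khat \<omega>) \<omega> - Lh (khat \<omega>) \<omega>" using w unfolding E_def by auto
    moreover have "Lh (khat \<omega>) \<omega> + C (khat \<omega>) \<omega> \<le> Lh k \<omega> + C k \<omega>"
      using khat_min[OF k w] unfolding Lh_def .
    ultimately show ?thesis using False unfolding Lf_def Lk_def by (simp add: indicator_def)
  qed
  have intLf: "integrable M Lf"
    by (rule integrable_const_bound[where B=1]) (use loss_bd Lfinal_meas in \<open>auto simp: Lf_def[abs_def]\<close>)
  have intLh: "integrable M (Lh k)" if "k \<ge> 1" for k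
    by (rule integrable_const_bound[where B=1])
      (use Lhat_meas[OF that] in \<open>auto simp: Lh_def[abs_def] abs_le_iff intro!: AE_I2 emp_loss_le1 order.trans[OF _ emp_loss_nonneg]\<close>)
  have Fne: "F k \<noteq> {}" if "k \<ge> 1" for k
    using fhat_in[OF that, of "SOME \<omega>. \<omega> \<in> space M"] not_empty some_in_eq by auto
  have Lh_le: "integral\<^sup>L M (Lh k) \<le> (INF f\<in>F k. loss M X Y f)" if k: "k \<ge> 1" for k
  proof (rule cInf_greatest)
    show "(\<lambda>f. loss M X Y f) ` F k \<noteq> {}" using Fne[OF k] by auto
  next
    fix x assume "x \<in> (\<lambda>f. loss M X Y f) ` F k"
    then obtain g where g: "g \<in> F k" and x: "x = loss M X Y g" by auto
    have gc: "g \<in> classifiers" using F_cls[OF k] g by auto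
    note ee = exp_emp_loss[OF prob n_pos X_meas Y_meas Xs_meas Ys_meas ident gc]
    have "integral\<^sup>L M (Lh k) \<le> integral\<^sup>L M (emp_loss n Xs Ys g)"
      using ee intLh[OF k] fhat_min[OF k _ g] by (intro integral_mono) (auto simp: Lh_def)
    then show "integral\<^sup>L M (Lh k) \<le> x" using ee x by simp
  qed
  have main: "integral\<^sup>L M Lf \<le> c + (INF f\<in>F k. loss M X Y f) + integral\<^sup>L M (C k)"
    if k: "k \<ge> 1" and intC: "integrable M (C k)" for k
  proof -
    have intU: "integrable M (indicator U :: 'o \<Rightarrow> real)"
      using Usets by (intro integrable_real_indicator) (auto simp: emeasure_eq_measure)
    have "integral\<^sup>L M Lf \<le> integral\<^sup>L M (\<lambda>\<omega>. indicator U \<omega> + Lh k \<omega> + C k \<omega>)"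
      using intLf intU intLh[OF k] intC pointwise[OF k] by (intro integral_mono) auto
    also have "\<dots> = measure M U + integral\<^sup>L M (Lh k) + integral\<^sup>L M (C k)"
      using intU intLh[OF k] intC Usets by (simp add: Int_absorb2 sets.sets_into_space)
    finally show ?thesis using PU Lh_le[OF k] by linarith
  qed
  define a where "a = (\<integral>\<omega>. loss M X Y (fhat (khat \<omega>) \<omega>) \<partial>M) - Ls"
  have a_eq: "a = integral\<^sup>L M Lf - Ls" unfolding a_def Lf_def by simp
  have each: "ereal (a - c) \<le> ereal ((INF f\<in>F k. loss M X Y f) - Ls) + enn2ereal (\<integral>\<^sup>+\<omega>. ennreal (C k \<omega>) \<partial>M)"
    if k: "k \<ge> 1" for k
  proof (cases "(\<integral>\<^sup>+\<omega>. ennreal (C k \<omega>) \<partial>M) = \<infinity>")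
    case True
    then show ?thesis by simp
  next
    case False
    then obtain r where r: "(\<integral>\<^sup>+\<omega>. ennreal (C k \<omega>) \<partial>M) = ennreal r" "r \<ge> 0"
      using ennreal_cases[of "(\<integral>\<^sup>+\<omega>. ennreal (C k \<omega>) \<partial>M)"] by auto
    have intC: "integrable M (C k)"
      using C_meas[OF k] C_nonneg[OF k] r(1) by (intro integrableI_nn_integral_finite) auto
    have "(\<integral>\<^sup>+\<omega>. ennreal (C k \<omega>) \<partial>M) = ennreal (integral\<^sup>L M (C k))"
      using intC C_nonneg[OF k] by (intro nn_integral_eq_integral) auto
    moreover have "integral\<^sup>L M (C k) \<ge> 0"
      using C_nonneg[OF k] by (intro integral_nonneg_AE) auto
    ultimately have "enn2ereal (\<integral>\<^sup>+\<omega>. ennreal (C k \<omega>) \<partial>M) = ereal (integral\<^sup>L M (C k))"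
      by simp
    then show ?thesis using main[OF k intC] a_eq by simp
  qed
  have "ereal (a - c) \<le> (INF k\<in>{1..}. ereal ((INF f\<in>F k. loss M X Y f) - Ls) + enn2ereal (\<integral>\<^sup>+\<omega>. ennreal (C k \<omega>) \<partial>M))"
    using each by (intro INF_greatest) auto
  then have "ereal (a - c) + ereal c \<le> (INF k\<in>{1..}. ereal ((INF f\<in>F k. loss M X Y f) - Ls) + enn2ereal (\<integral>\<^sup>+\<omega>. ennreal (C k \<omega>) \<partial>M)) + ereal c"
    by (rule add_right_mono)
  then show ?thesis unfolding a_def Ls_def c_def by simp
qed

end
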